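(* Assume Assumption 1 (randomization) and $0<P(Z=1\mid R=r)<1$, without assuming monotonicity. If $P_{01r}>P_{10r}$, then $\pi_{ss,r}>0$ and $$\max\Big\{0,1-\frac{(1-Q_{11r})P_{11r}}{P_{01r}-P_{10r}}\Big\}-\min\Big\{1,\frac{Q_{01r}P_{01r}}{P_{01r}-P_{10r}}\Big\}\ \le\ ACE_{ss,r}\ \le\ \min\Big\{1,\frac{Q_{11r}P_{11r}}{P_{01r}-P_{10r}}\Big\}+\min\Big\{0,\frac{(1-Q_{01r})P_{01r}}{P_{01r}-P_{10r}}-1\Big\}.$$
   Context: A unit has trial $R$, treatment $Z\in\{0,1\}$, binary potential surrogate and endpoint $S(z),Y(z)$; observed $S=ZS(1)+(1-Z)S(0)$, $Y=ZY(1)+(1-Z)Y(0)$. $U=(S(1),S(0))$ with $ss=(1,1)$, $s\bar{s}=(1,0)$, $\bar{s}s=(0,1)$, $\bar{s}\bar{s}=(0,0)$; $\pi_{ur}=P(U=u\mid R=r)$; $ACE_{ur}=E\{Y(1)-Y(0)\mid U=u,R=r\}$. $P_{zsr}=P(S=s\mid Z=z,R=r)$ and $Q_{zsr}=P(Y=1\mid Z=z,S=s,R=r)$. Assumption 1 (randomization): $Z\perp\!\!\!\perp\{S(1),S(0),Y(1),Y(0)\}\mid R$. *)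

theory Defs
  imports "HOL-Probability.Probability"
begin

text \<open>A unit: trial R, treatment Z, potential surrogates S(1), S(0),
  potential endpoints Y(1), Y(0) (binary values encoded as bool).\<close>
record 'r unit_data =
  trial :: 'r
  trt :: bool
  s1 :: bool
  s0 :: bool
  y1 :: bool
  y0 :: bool

definition obsS :: "('r, 'x) unit_data_scheme \<Rightarrow> bool" where
  "obsS \<omega> = (if trt \<omega> then s1 \<omega> else s0 \<omega>)"

definition obsY :: "('r, 'x) unit_data_scheme \<Rightarrow> bool" where
  "obsY \<omega> = (if trt \<omega> then y1 \<omega> else y0 \<omega>)"

definition bv :: "bool \<Rightarrow> real" where "bv b = (if b then 1 else 0)"

definition Pr :: "'a pmf \<Rightarrow> ('a \<Rightarrow> bool) \<Rightarrow> real" where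
  "Pr p A = measure_pmf.prob p {\<omega>. A \<omega>}"

text \<open>Conditional probability P(A | B) (0 if P(B)=0).\<close>
definition cPr :: "'a pmf \<Rightarrow> ('a \<Rightarrow> bool) \<Rightarrow> ('a \<Rightarrow> bool) \<Rightarrow> real" where
  "cPr p A B = Pr p (\<lambda>\<omega>. A \<omega> \<and> B \<omega>) / Pr p B"

text \<open>Conditional expectation E(f | B) (0 if P(B)=0).\<close>
definition cE :: "'a pmf \<Rightarrow> ('a \<Rightarrow> real) \<Rightarrow> ('a \<Rightarrow> bool) \<Rightarrow> real" where
  "cE p f B = measure_pmf.expectation p (\<lambda>\<omega>. (if B \<omega> then f \<omega> else 0)) / Pr p B"

text \<open>Assumption 1: Z independent of (S(1),S(0),Y(1),Y(0)) given R.\<close>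
definition randomization :: "'r unit_data pmf \<Rightarrow> bool" where
  "randomization p \<longleftrightarrow>
     (\<forall>r z a b c d.
        Pr p (\<lambda>\<omega>. trial \<omega> = r \<and> trt \<omega> = z \<and> s1 \<omega> = a \<and> s0 \<omega> = b \<and> y1 \<omega> = c \<and> y0 \<omega> = d)
          * Pr p (\<lambda>\<omega>. trial \<omega> = r)
        = Pr p (\<lambda>\<omega>. trial \<omega> = r \<and> trt \<omega> = z)
          * Pr p (\<lambda>\<omega>. trial \<omega> = r \<and> s1 \<omega> = a \<and> s0 \<omega> = b \<and> y1 \<omega> = c \<and> y0 \<omega> = d))"

definition Pzsr :: "'r unit_data pmf \<Rightarrow> bool \<Rightarrow> bool \<Rightarrow> 'r \<Rightarrow> real" where
  "Pzsr p z s r = cPr p (\<lambda>\<omega>. obsS \<omega> = s) (\<lambda>\<omega>. trt \<omega> = z \<and> trial \<omega> = r)"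

definition Qzsr :: "'r unit_data pmf \<Rightarrow> bool \<Rightarrow> bool \<Rightarrow> 'r \<Rightarrow> real" where
  "Qzsr p z s r = cPr p (\<lambda>\<omega>. obsY \<omega>) (\<lambda>\<omega>. trt \<omega> = z \<and> obsS \<omega> = s \<and> trial \<omega> = r)"

definition pi_ur :: "'r unit_data pmf \<Rightarrow> bool \<times> bool \<Rightarrow> 'r \<Rightarrow> real" where
  "pi_ur p u r = cPr p (\<lambda>\<omega>. (s1 \<omega>, s0 \<omega>) = u) (\<lambda>\<omega>. trial \<omega> = r)"

definition ACE_ur :: "'r unit_data pmf \<Rightarrow> bool \<times> bool \<Rightarrow> 'r \<Rightarrow> real" where
  "ACE_ur p u r = cE p (\<lambda>\<omega>. bv (y1 \<omega>) - bv (y0 \<omega>))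
                      (\<lambda>\<omega>. (s1 \<omega>, s0 \<omega>) = u \<and> trial \<omega> = r)"

end

theory Submission
  imports Defs
begin

definition tup :: "'r unit_data \<Rightarrow> bool \<times> bool \<times> bool \<times> bool" where
  "tup \<omega> = (s1 \<omega>, s0 \<omega>, y1 \<omega>, y0 \<omega>)"

lemma Pr_cong: assumes "\<And>\<omega>. A \<omega> \<longleftrightarrow> B \<omega>" shows "Pr p A = Pr p B"
proof -
  have "A = B" using assms by auto
  then show ?thesis by simp
qed

lemma Pr_mono: "(\<And>\<omega>. A \<omega> \<Longrightarrow> B \<omega>) \<Longrightarrow> Pr p A \<le> Pr p B"
  unfolding Pr_def by (rule measure_pmf.finite_measure_mono) auto

lemma Pr_nonneg: "0 \<le> Pr p A"
  unfolding Pr_def by simp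

lemma Pr_split2: "Pr p B = Pr p (\<lambda>\<omega>. B \<omega> \<and> C \<omega>) + Pr p (\<lambda>\<omega>. B \<omega> \<and> \<not> C \<omega>)"
proof -
  have "{\<omega>. B \<omega>} = {\<omega>. B \<omega> \<and> C \<omega>} \<union> {\<omega>. B \<omega> \<and> \<not> C \<omega>}" by auto
  then show ?thesis unfolding Pr_def
    by (metis (no_types, lifting) measure_pmf.finite_measure_Union sets_measure_pmf UNIV_I
        disjoint_iff mem_Collect_eq)
qed

lemma Pr_split:
  fixes f :: "'a \<Rightarrow> 'b::finite"
  shows "Pr p (\<lambda>\<omega>. B \<omega> \<and> A (f \<omega>)) = (\<Sum>x\<in>{x. A x}. Pr p (\<lambda>\<omega>. B \<omega> \<and> f \<omega> = x))"
proof -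
  have "{\<omega>. B \<omega> \<and> A (f \<omega>)} = (\<Union>x\<in>{x. A x}. {\<omega>. B \<omega> \<and> f \<omega> = x})" by auto
  moreover have "measure_pmf.prob p (\<Union>x\<in>{x. A x}. {\<omega>. B \<omega> \<and> f \<omega> = x})
     = (\<Sum>x\<in>{x. A x}. measure_pmf.prob p {\<omega>. B \<omega> \<and> f \<omega> = x})"
    by (rule measure_pmf.finite_measure_finite_Union) (auto simp: disjoint_family_on_def)
  ultimately show ?thesis unfolding Pr_def by simp
qed

lemma rand_tup:
  assumes "randomization p"
  shows "Pr p (\<lambda>\<omega>. (trial \<omega> = r \<and> trt \<omega> = z) \<and> tup \<omega> = x) * Pr p (\<lambda>\<omega>. trial \<omega> = r)
     = Pr p (\<lambda>\<omega>. trial \<omega> = r \<and> trt \<omega> = z) * Pr p (\<lambda>\<omega>. trial \<omega> = r \<and> tup \<omega> = x)"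
proof -
  obtain a b c d where x: "x = (a,b,c,d)" by (cases x) auto
  show ?thesis using assms unfolding randomization_def x tup_def
    by (simp add: conj_assoc)
qed

lemma rand_gen:
  assumes "randomization p" and "\<And>\<omega>. A \<omega> = F (tup \<omega>)"
  shows "Pr p (\<lambda>\<omega>. trial \<omega> = r \<and> trt \<omega> = z \<and> A \<omega>) * Pr p (\<lambda>\<omega>. trial \<omega> = r)
     = Pr p (\<lambda>\<omega>. trial \<omega> = r \<and> trt \<omega> = z) * Pr p (\<lambda>\<omega>. trial \<omega> = r \<and> A \<omega>)"
proof -
  have e1: "Pr p (\<lambda>\<omega>. trial \<omega> = r \<and> trt \<omega> = z \<and> A \<omega>)
      = Pr p (\<lambda>\<omega>. (trial \<omega> = r \<and> trt \<omega> = z) \<and> F (tup \<omega>))"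
    by (rule Pr_cong) (simp add: assms(2))
  have e2: "Pr p (\<lambda>\<omega>. trial \<omega> = r \<and> A \<omega>) = Pr p (\<lambda>\<omega>. trial \<omega> = r \<and> F (tup \<omega>))"
    by (rule Pr_cong) (simp add: assms(2))
  show ?thesis unfolding e1 e2
      Pr_split[of p "\<lambda>\<omega>. trial \<omega> = r \<and> trt \<omega> = z" F tup]
      Pr_split[of p "\<lambda>\<omega>. trial \<omega> = r" F tup] sum_distrib_left sum_distrib_right
    using rand_tup[OF assms(1)] by (simp add: mult.commute)
qed


lemma Pr_split3:
  assumes "\<And>\<omega>. A \<omega> \<longleftrightarrow> (B \<omega> \<and> C \<omega>)" "\<And>\<omega>. A' \<omega> \<longleftrightarrow> (B \<omega> \<and> \<not> C \<omega>)"
  shows "Pr p B = Pr p A + Pr p A'"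
proof -
  have "Pr p A = Pr p (\<lambda>\<omega>. B \<omega> \<and> C \<omega>)" "Pr p A' = Pr p (\<lambda>\<omega>. B \<omega> \<and> \<not> C \<omega>)"
    using assms by (auto intro: Pr_cong)
  then show ?thesis using Pr_split2[of p B C] by simp
qed

lemma conv:
  assumes "randomization p" "\<And>\<omega>. A \<omega> = F (tup \<omega>)"
    "0 < Pr p (\<lambda>\<omega>. trial \<omega> = r \<and> trt \<omega> = z)" "0 < Pr p (\<lambda>\<omega>. trial \<omega> = r)"
    "\<And>\<omega>. (X \<omega> \<and> B \<omega>) \<longleftrightarrow> (trial \<omega> = r \<and> trt \<omega> = z \<and> A \<omega>)"
    "\<And>\<omega>. B \<omega> \<longleftrightarrow> (trial \<omega> = r \<and> trt \<omega> = z)"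
  shows "cPr p X B = Pr p (\<lambda>\<omega>. trial \<omega> = r \<and> A \<omega>) / Pr p (\<lambda>\<omega>. trial \<omega> = r)"
proof -
  have e1: "Pr p (\<lambda>\<omega>. X \<omega> \<and> B \<omega>) = Pr p (\<lambda>\<omega>. trial \<omega> = r \<and> trt \<omega> = z \<and> A \<omega>)"
    using assms(5) by (rule Pr_cong)
  have e2: "Pr p B = Pr p (\<lambda>\<omega>. trial \<omega> = r \<and> trt \<omega> = z)"
    using assms(6) by (rule Pr_cong)
  have rg: "Pr p (\<lambda>\<omega>. trial \<omega> = r \<and> trt \<omega> = z \<and> A \<omega>) * Pr p (\<lambda>\<omega>. trial \<omega> = r)
     = Pr p (\<lambda>\<omega>. trial \<omega> = r \<and> trt \<omega> = z) * Pr p (\<lambda>\<omega>. trial \<omega> = r \<and> A \<omega>)"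
    using rand_gen[of p A F, OF assms(1,2)] by simp
  show ?thesis unfolding cPr_def e1 e2 using assms(3,4) rg
    by (simp add: field_simps)
qed

lemma convQP:
  assumes "randomization p" "\<And>\<omega>. A \<omega> = F (tup \<omega>)"
    "0 < Pr p (\<lambda>\<omega>. trial \<omega> = r \<and> trt \<omega> = z)" "0 < Pr p (\<lambda>\<omega>. trial \<omega> = r)"
    "\<And>\<omega>. (Y \<omega> \<and> B \<omega>) \<longleftrightarrow> (trial \<omega> = r \<and> trt \<omega> = z \<and> A \<omega>)"
    "\<And>\<omega>. (S \<omega> \<and> C \<omega>) \<longleftrightarrow> B \<omega>"
    "\<And>\<omega>. C \<omega> \<longleftrightarrow> (trial \<omega> = r \<and> trt \<omega> = z)"
  shows "cPr p Y B * cPr p S C = Pr p (\<lambda>\<omega>. trial \<omega> = r \<and> A \<omega>) / Pr p (\<lambda>\<omega>. trial \<omega> = r)"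
proof -
  have eB: "Pr p (\<lambda>\<omega>. S \<omega> \<and> C \<omega>) = Pr p B" using assms(6) by (rule Pr_cong)
  have le: "Pr p (\<lambda>\<omega>. Y \<omega> \<and> B \<omega>) \<le> Pr p B" by (rule Pr_mono) auto
  have "cPr p Y B * cPr p S C = Pr p (\<lambda>\<omega>. Y \<omega> \<and> B \<omega>) / Pr p C"
  proof (cases "Pr p B = 0")
    case True
    then have "Pr p (\<lambda>\<omega>. Y \<omega> \<and> B \<omega>) = 0" using le Pr_nonneg[of p] by (metis order_antisym)
    then show ?thesis unfolding cPr_def using True by simp
  next
    case False
    then show ?thesis unfolding cPr_def eB by simp
  qed
  also have "\<dots> = Pr p (\<lambda>\<omega>. trial \<omega> = r \<and> A \<omega>) / Pr p (\<lambda>\<omega>. trial \<omega> = r)"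
  proof -
    have e1: "Pr p (\<lambda>\<omega>. Y \<omega> \<and> B \<omega>) = Pr p (\<lambda>\<omega>. trial \<omega> = r \<and> trt \<omega> = z \<and> A \<omega>)"
      using assms(5) by (rule Pr_cong)
    have e2: "Pr p C = Pr p (\<lambda>\<omega>. trial \<omega> = r \<and> trt \<omega> = z)"
      using assms(7) by (rule Pr_cong)
    have rg: "Pr p (\<lambda>\<omega>. trial \<omega> = r \<and> trt \<omega> = z \<and> A \<omega>) * Pr p (\<lambda>\<omega>. trial \<omega> = r)
       = Pr p (\<lambda>\<omega>. trial \<omega> = r \<and> trt \<omega> = z) * Pr p (\<lambda>\<omega>. trial \<omega> = r \<and> A \<omega>)"
      using rand_gen[of p A F, OF assms(1,2)] by simp
    show ?thesis unfolding e1 e2 using assms(3,4) rg by (simp add: field_simps)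
  qed
  finally show ?thesis .
qed

lemma final:
  fixes Pss Y1 Y0 X1 X0 W1 W0 D :: real
  assumes "D > 0" "D \<le> Pss" "0 \<le> Y1" "Y1 \<le> Pss" "0 \<le> Y0" "Y0 \<le> Pss"
    "Y1 \<le> X1" "Y0 \<le> X0" "Pss - Y1 \<le> W1" "Pss - Y0 \<le> W0"
  shows "max 0 (1 - W1/D) - min 1 (X0/D) \<le> (Y1-Y0)/Pss \<and> (Y1-Y0)/Pss \<le> min 1 (X1/D) + min 0 (W0/D - 1)"
proof -
  have P: "Pss > 0" using assms by linarith
  have gen: "Y/Pss \<le> X/D" if "0 \<le> Y" "Y \<le> X" for X Y
  proof -
    have "Y/Pss \<le> Y/D" using that assms P by (intro divide_left_mono) auto
    also have "\<dots> \<le> X/D" using that assms by (intro divide_right_mono) auto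
    finally show ?thesis .
  qed
  have a1: "Y1/Pss \<le> X1/D" using gen assms by auto
  have a0: "Y0/Pss \<le> X0/D" using gen assms by auto
  have b1: "(Pss-Y1)/Pss \<le> W1/D" using gen assms by auto
  have b0: "(Pss-Y0)/Pss \<le> W0/D" using gen assms by auto
  have c1: "(Pss-Y1)/Pss = 1 - Y1/Pss" "(Pss-Y0)/Pss = 1 - Y0/Pss" "(Y1-Y0)/Pss = Y1/Pss - Y0/Pss"
    using P by (auto simp: diff_divide_distrib)
  have d: "0 \<le> Y1/Pss" "Y1/Pss \<le> 1" "0 \<le> Y0/Pss" "Y0/Pss \<le> 1" using assms P by auto
  show ?thesis using a1 a0 b1 b0 c1 d unfolding max_def min_def by auto
qed

theorem propositionA1:
  fixes p :: "'r unit_data pmf" and r :: 'r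
  assumes "randomization p"
    and "0 < cPr p (\<lambda>\<omega>. trt \<omega>) (\<lambda>\<omega>. trial \<omega> = r)"
    and "cPr p (\<lambda>\<omega>. trt \<omega>) (\<lambda>\<omega>. trial \<omega> = r) < 1"
    and "Pzsr p False True r > Pzsr p True False r"
  shows "pi_ur p (True, True) r > 0 \<and>
    max 0 (1 - (1 - Qzsr p True True r) * Pzsr p True True r
                 / (Pzsr p False True r - Pzsr p True False r))
    - min 1 (Qzsr p False True r * Pzsr p False True r
                 / (Pzsr p False True r - Pzsr p True False r))
      \<le> ACE_ur p (True, True) r \<and>
    ACE_ur p (True, True) r \<le>
      min 1 (Qzsr p True True r * Pzsr p True True r
                 / (Pzsr p False True r - Pzsr p True False r))
    + min 0 ((1 - Qzsr p False True r) * Pzsr p False True r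
                 / (Pzsr p False True r - Pzsr p True False r) - 1)"
proof -
  define pR where "pR = Pr p (\<lambda>\<omega>. trial \<omega> = r)"
  define pT where "pT = Pr p (\<lambda>\<omega>. trial \<omega> = r \<and> trt \<omega> = True)"
  define pC where "pC = Pr p (\<lambda>\<omega>. trial \<omega> = r \<and> trt \<omega> = False)"
  have cT: "cPr p (\<lambda>\<omega>. trt \<omega>) (\<lambda>\<omega>. trial \<omega> = r) = pT / pR"
    unfolding cPr_def pT_def pR_def by (simp add: conj_commute)
  have sp: "pR = pT + pC" unfolding pR_def pT_def pC_def
    using Pr_split2[of p "\<lambda>\<omega>. trial \<omega> = r" "\<lambda>\<omega>. trt \<omega>"] by simp
  have pRpos: "pR > 0" using assms(2) cT Pr_nonneg[of p] pR_def
    by (metis div_by_0 order_less_le)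
  have pTpos: "pT > 0" using assms(2) cT pRpos by (simp add: zero_less_divide_iff)
  have pCpos: "pC > 0" using assms(3) cT pRpos sp by (simp add: divide_less_eq)
  have pT': "0 < Pr p (\<lambda>\<omega>. trial \<omega> = r \<and> trt \<omega> = True)" using pTpos pT_def by simp
  have pC': "0 < Pr p (\<lambda>\<omega>. trial \<omega> = r \<and> trt \<omega> = False)" using pCpos pC_def by simp
  have pR': "0 < Pr p (\<lambda>\<omega>. trial \<omega> = r)" using pRpos pR_def by simp
  define S1 where "S1 = Pr p (\<lambda>\<omega>. trial \<omega> = r \<and> s1 \<omega>)"
  define S0 where "S0 = Pr p (\<lambda>\<omega>. trial \<omega> = r \<and> s0 \<omega>)"
  define NS1 where "NS1 = Pr p (\<lambda>\<omega>. trial \<omega> = r \<and> \<not> s1 \<omega>)"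
  define X1 where "X1 = Pr p (\<lambda>\<omega>. trial \<omega> = r \<and> (y1 \<omega> \<and> s1 \<omega>))"
  define X0 where "X0 = Pr p (\<lambda>\<omega>. trial \<omega> = r \<and> (y0 \<omega> \<and> s0 \<omega>))"
  define Pss where "Pss = Pr p (\<lambda>\<omega>. trial \<omega> = r \<and> s1 \<omega> \<and> s0 \<omega>)"
  define Pbs where "Pbs = Pr p (\<lambda>\<omega>. trial \<omega> = r \<and> \<not> s1 \<omega> \<and> s0 \<omega>)"
  define Pbb where "Pbb = Pr p (\<lambda>\<omega>. trial \<omega> = r \<and> \<not> s1 \<omega> \<and> \<not> s0 \<omega>)"
  define Y1 where "Y1 = Pr p (\<lambda>\<omega>. trial \<omega> = r \<and> s1 \<omega> \<and> s0 \<omega> \<and> y1 \<omega>)"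
  define Y0 where "Y0 = Pr p (\<lambda>\<omega>. trial \<omega> = r \<and> s1 \<omega> \<and> s0 \<omega> \<and> y0 \<omega>)"
  define N1 where "N1 = Pr p (\<lambda>\<omega>. trial \<omega> = r \<and> s1 \<omega> \<and> \<not> y1 \<omega>)"
  define N0 where "N0 = Pr p (\<lambda>\<omega>. trial \<omega> = r \<and> s0 \<omega> \<and> \<not> y0 \<omega>)"
  define M1 where "M1 = Pr p (\<lambda>\<omega>. trial \<omega> = r \<and> s1 \<omega> \<and> s0 \<omega> \<and> \<not> y1 \<omega>)"
  define M0 where "M0 = Pr p (\<lambda>\<omega>. trial \<omega> = r \<and> s1 \<omega> \<and> s0 \<omega> \<and> \<not> y0 \<omega>)"
  have P11: "Pzsr p True True r = S1 / pR" unfolding Pzsr_def S1_def pR_def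
    by (rule conv[OF assms(1), of _ "\<lambda>(a,b,c,d). a" r True, OF _ pT' pR'])
       (auto simp: tup_def obsS_def)
  have P01: "Pzsr p False True r = S0 / pR" unfolding Pzsr_def S0_def pR_def
    by (rule conv[OF assms(1), of _ "\<lambda>(a,b,c,d). b" r False, OF _ pC' pR'])
       (auto simp: tup_def obsS_def)
  have P10: "Pzsr p True False r = NS1 / pR" unfolding Pzsr_def NS1_def pR_def
    by (rule conv[OF assms(1), of _ "\<lambda>(a,b,c,d). \<not> a" r True, OF _ pT' pR'])
       (auto simp: tup_def obsS_def)
  have QP11: "Qzsr p True True r * Pzsr p True True r = X1 / pR" unfolding Pzsr_def Qzsr_def X1_def pR_def
    by (rule convQP[OF assms(1), of _ "\<lambda>(a,b,c,d). c \<and> a" r True, OF _ pT' pR'])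
       (auto simp: tup_def obsS_def obsY_def)
  have QP01: "Qzsr p False True r * Pzsr p False True r = X0 / pR" unfolding Pzsr_def Qzsr_def X0_def pR_def
    by (rule convQP[OF assms(1), of _ "\<lambda>(a,b,c,d). d \<and> b" r False, OF _ pC' pR'])
       (auto simp: tup_def obsS_def obsY_def)
  have pi: "pi_ur p (True, True) r = Pss / pR" unfolding pi_ur_def cPr_def Pss_def pR_def
    by (simp add: conj_commute)
  have ace_num: "measure_pmf.expectation p (\<lambda>\<omega>. if (s1 \<omega>, s0 \<omega>) = (True, True) \<and> trial \<omega> = r
        then bv (y1 \<omega>) - bv (y0 \<omega>) else 0) = Y1 - Y0"
  proof -
    have eq: "(\<lambda>\<omega>. if (s1 \<omega>, s0 \<omega>) = (True, True) \<and> trial \<omega> = r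
        then bv (y1 \<omega>) - bv (y0 \<omega>) else 0)
      = (\<lambda>\<omega>. indicator {\<omega>. trial \<omega> = r \<and> s1 \<omega> \<and> s0 \<omega> \<and> y1 \<omega>} \<omega>
           - indicator {\<omega>. trial \<omega> = r \<and> s1 \<omega> \<and> s0 \<omega> \<and> y0 \<omega>} \<omega>)"
      (is "_ = (\<lambda>\<omega>. indicator ?E1 \<omega> - indicator ?E0 \<omega>)")
      by (auto simp: bv_def indicator_def)
    have i: "integrable (measure_pmf p) (indicator ?E1 :: _ \<Rightarrow> real)"
      "integrable (measure_pmf p) (indicator ?E0 :: _ \<Rightarrow> real)"
      by (simp_all add: measure_pmf.emeasure_finite less_top[symmetric])
    show ?thesis unfolding Y1_def Y0_def Pr_def eq Bochner_Integration.integral_diff[OF i] by simp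
  qed
  have pss_eq: "Pr p (\<lambda>\<omega>. (s1 \<omega>, s0 \<omega>) = (True, True) \<and> trial \<omega> = r) = Pss"
    unfolding Pss_def by (rule Pr_cong) auto
  have ace: "ACE_ur p (True, True) r = (Y1 - Y0) / Pss" unfolding ACE_ur_def cE_def ace_num pss_eq ..
  have r1: "S0 = Pss + Pbs" unfolding S0_def Pss_def Pbs_def by (rule Pr_split3[where C="\<lambda>\<omega>. s1 \<omega>"]) auto
  have r2: "NS1 = Pbs + Pbb" unfolding NS1_def Pbb_def Pbs_def by (rule Pr_split3[where C="\<lambda>\<omega>. s0 \<omega>"]) auto
  have r3: "S1 = X1 + N1" unfolding S1_def X1_def N1_def by (rule Pr_split3[where C="\<lambda>\<omega>. y1 \<omega>"]) auto
  have r4: "S0 = X0 + N0" unfolding S0_def X0_def N0_def by (rule Pr_split3[where C="\<lambda>\<omega>. y0 \<omega>"]) auto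
  have r5: "Pss = Y1 + M1" unfolding Pss_def Y1_def M1_def by (rule Pr_split3[where C="\<lambda>\<omega>. y1 \<omega>"]) auto
  have r6: "Pss = Y0 + M0" unfolding Pss_def Y0_def M0_def by (rule Pr_split3[where C="\<lambda>\<omega>. y0 \<omega>"]) auto
  have m1: "Y1 \<le> X1" unfolding Y1_def X1_def by (rule Pr_mono) auto
  have m2: "Y0 \<le> X0" unfolding Y0_def X0_def by (rule Pr_mono) auto
  have m3: "M1 \<le> N1" unfolding M1_def N1_def by (rule Pr_mono) auto
  have m4: "M0 \<le> N0" unfolding M0_def N0_def by (rule Pr_mono) auto
  have nn: "0 \<le> Pbb" "0 \<le> Y1" "0 \<le> Y0" "0 \<le> M1" "0 \<le> M0" "0 \<le> Pbs"
    unfolding Pbb_def Y1_def Y0_def M1_def M0_def Pbs_def by (rule Pr_nonneg)+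
  have Dpos: "S0 - NS1 > 0" using assms(4) P01 P10 pRpos by (simp add: divide_less_cancel)
  have ratio: "\<And>a. (a / pR) / (S0 / pR - NS1 / pR) = a / (S0 - NS1)"
    using pRpos by (simp add: diff_divide_distrib[symmetric])
  have one: "(1 - Qzsr p True True r) * Pzsr p True True r = (S1 - X1) / pR"
    "(1 - Qzsr p False True r) * Pzsr p False True r = (S0 - X0) / pR"
  proof -
    have e: "(1 - Qzsr p True True r) * Pzsr p True True r = Pzsr p True True r - Qzsr p True True r * Pzsr p True True r"
      "(1 - Qzsr p False True r) * Pzsr p False True r = Pzsr p False True r - Qzsr p False True r * Pzsr p False True r"
      by (simp_all add: algebra_simps)
    then show "(1 - Qzsr p True True r) * Pzsr p True True r = (S1 - X1) / pR"
      "(1 - Qzsr p False True r) * Pzsr p False True r = (S0 - X0) / pR"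
      by (simp only: e QP11 QP01, simp only: P11 P01 diff_divide_distrib)+
  qed
  have fin: "max 0 (1 - (S1 - X1)/(S0 - NS1)) - min 1 (X0/(S0 - NS1)) \<le> (Y1-Y0)/Pss \<and>
     (Y1-Y0)/Pss \<le> min 1 (X1/(S0 - NS1)) + min 0 ((S0 - X0)/(S0 - NS1) - 1)"
    by (rule final) (use Dpos r1 r2 r3 r4 r5 r6 m1 m2 m3 m4 nn in linarith)+
  have pipos: "pi_ur p (True, True) r > 0" unfolding pi
    using Dpos r1 r2 nn pRpos by simp
  show ?thesis unfolding one unfolding QP11 QP01 unfolding P01 P10 unfolding ratio ace using fin pipos by simp
qed

end
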